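(* Let $r\in\{3,5\}$, let $q$ be an odd prime distinct from $r$, let $R=\mathrm{C}_q\times\mathrm{D}_{2r}$, and let $S\subseteq R$ with $S=S^{-1}$. If $\mathrm{Cay}(R,S)$ is a nontrivial generalised wreath product with respect to subgroups $K$ and $H$, and $K$ has prime order, then $\mathrm{Aut}(R)_S>1$.
   Context: $\mathrm{C}_q$ is the cyclic group of order $q$, $\mathrm{D}_{2r}$ the dihedral group of order $2r$. $\mathrm{Aut}(R)_S$ is the group of automorphisms of $R$ fixing $S$ setwise. $\mathrm{Cay}(R,S)$ (vertex set $R$, arcs $r\to sr$ for $s\in S$) is a nontrivial generalised wreath product with respect to $K$ and $H$ if $1<K\trianglelefteq H<R$ and $K(S\setminus H)=S\setminus H=(S\setminus H)K$. *)

theory Defs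
  imports "HOL-Algebra.Algebra" "HOL-Computational_Algebra.Primes"
begin

text \<open>Dihedral group of order 2r: elements x^b y^e (0 \<le> b < r, e \<in> {0,1}) encoded as (b, e),
  with y x y^-1 = x^-1, so (x^b1 y^e1)(x^b2 y^e2) = x^(b1 \<plusminus> b2) y^(e1+e2).\<close>
definition dihedral_group :: "nat \<Rightarrow> (int \<times> bool) monoid" where
  "dihedral_group r =
     \<lparr> carrier = {0..<int r} \<times> UNIV,
       monoid.mult = (\<lambda>(b1, e1) (b2, e2). ((b1 + (if e1 then - b2 else b2)) mod int r, e1 \<noteq> e2)),
       one = (0, False) \<rparr>"

definition CqD :: "nat \<Rightarrow> nat \<Rightarrow> (int \<times> (int \<times> bool)) monoid" where
  "CqD q r = DirProd (integer_mod_group q) (dihedral_group r)"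

definition nontrivial_gen_wreath :: "('a, 'b) monoid_scheme \<Rightarrow> 'a set \<Rightarrow> 'a set \<Rightarrow> 'a set \<Rightarrow> bool" where
  "nontrivial_gen_wreath R S K H \<longleftrightarrow>
     subgroup H R \<and> H \<noteq> carrier R \<and>
     K \<subseteq> H \<and> normal K (R\<lparr>carrier := H\<rparr>) \<and> K \<noteq> {\<one>\<^bsub>R\<^esub>} \<and>
     K <#>\<^bsub>R\<^esub> (S - H) = S - H \<and> (S - H) <#>\<^bsub>R\<^esub> K = S - H"

definition Aut_stab :: "('a, 'b) monoid_scheme \<Rightarrow> 'a set \<Rightarrow> ('a \<Rightarrow> 'a) set" where
  "Aut_stab R S = {\<sigma> \<in> iso R R. \<sigma> ` S = S}"

end

theory Submission
  imports Defs
begin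


lemma G_carrier: "q > 0 \<Longrightarrow> carrier (CqD q r) = {0..<int q} \<times> ({0..<int r} \<times> UNIV)"
  by (simp add: CqD_def DirProd_def dihedral_group_def carrier_integer_mod_group)

lemma G_mult: "(c,b,e) \<otimes>\<^bsub>CqD q r\<^esub> (c2,b2,e2) = ((c + c2) mod int q, (b + (if e then -b2 else b2)) mod int r, e \<noteq> e2)"
  by (simp add: CqD_def DirProd_def dihedral_group_def)

lemma G_one: "\<one>\<^bsub>CqD q r\<^esub> = (0,0,False)"
  by (simp add: CqD_def DirProd_def dihedral_group_def)

lemma D_group: assumes "r > 0" shows "group (dihedral_group r)"
proof (rule groupI)
  fix x y assume "x \<in> carrier (dihedral_group r)" "y \<in> carrier (dihedral_group r)"
  then show "x \<otimes>\<^bsub>dihedral_group r\<^esub> y \<in> carrier (dihedral_group r)"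
    using assms by (auto simp: dihedral_group_def split: prod.splits)
next
  show "\<one>\<^bsub>dihedral_group r\<^esub> \<in> carrier (dihedral_group r)" using assms by (simp add: dihedral_group_def)
next
  fix x y z assume "x \<in> carrier (dihedral_group r)" "y \<in> carrier (dihedral_group r)" "z \<in> carrier (dihedral_group r)"
  then show "x \<otimes>\<^bsub>dihedral_group r\<^esub> y \<otimes>\<^bsub>dihedral_group r\<^esub> z =
       x \<otimes>\<^bsub>dihedral_group r\<^esub> (y \<otimes>\<^bsub>dihedral_group r\<^esub> z)"
    by (auto simp: dihedral_group_def mod_simps algebra_simps split: prod.splits)
next
  fix x assume "x \<in> carrier (dihedral_group r)"
  then show "\<one>\<^bsub>dihedral_group r\<^esub> \<otimes>\<^bsub>dihedral_group r\<^esub> x = x"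
    by (auto simp: dihedral_group_def split: prod.splits)
next
  fix x assume x: "x \<in> carrier (dihedral_group r)"
  obtain b e where [simp]: "x = (b,e)" by (cases x)
  show "\<exists>y\<in>carrier (dihedral_group r). y \<otimes>\<^bsub>dihedral_group r\<^esub> x = \<one>\<^bsub>dihedral_group r\<^esub>"
  proof (rule bexI[of _ "(if e then b else (-b) mod int r, e)"])
    show "(if e then b else (-b) mod int r, e) \<otimes>\<^bsub>dihedral_group r\<^esub> x = \<one>\<^bsub>dihedral_group r\<^esub>"
      using x assms by (auto simp: dihedral_group_def mod_simps)
    show "(if e then b else (-b) mod int r, e) \<in> carrier (dihedral_group r)"
      using x assms by (auto simp: dihedral_group_def)
  qed
qed

lemma G_group: "q > 0 \<Longrightarrow> r > 0 \<Longrightarrow> group (CqD q r)"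
  unfolding CqD_def by (intro DirProd_group D_group group_integer_mod_group)

lemma G_inv: assumes "q > 0" "r > 0" "(c,b,e) \<in> carrier (CqD q r)"
  shows "inv\<^bsub>CqD q r\<^esub> (c,b,e) = ((-c) mod int q, (if e then b else (-b) mod int r), e)"
proof -
  interpret group "CqD q r" using G_group assms by blast
  show ?thesis
    apply (rule inv_equality)
    using assms by (auto simp: G_mult G_carrier G_one mod_simps)
qed

lemma mod_inner1: "(a + k * (x mod (m::int))) mod m = (a + k * x) mod m"
  by (metis mod_add_right_eq mod_mult_right_eq)

lemma mod_inner2: "(a + (b + x mod (m::int))) mod m = (a + (b + x)) mod m"
  by (metis mod_add_right_eq)

definition Fm :: "nat \<Rightarrow> nat \<Rightarrow> int \<Rightarrow> int \<Rightarrow> int \<Rightarrow> int \<times> int \<times> bool \<Rightarrow> int \<times> int \<times> bool" where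
  "Fm q r s k j x = (case x of (c,b,e) \<Rightarrow> ((s * c) mod int q, (k * b + (if e then j else 0)) mod int r, e))"

lemma Fm_simp: "Fm q r s k j (c,b,e) = ((s * c) mod int q, (k * b + (if e then j else 0)) mod int r, e)"
  by (simp add: Fm_def)

lemma Fm_hom: assumes "q > 0" "r > 0" shows "Fm q r s k j \<in> hom (CqD q r) (CqD q r)"
proof (rule homI)
  fix x assume "x \<in> carrier (CqD q r)"
  then show "Fm q r s k j x \<in> carrier (CqD q r)"
    using assms by (auto simp: G_carrier Fm_def)
next
  fix x y assume "x \<in> carrier (CqD q r)" "y \<in> carrier (CqD q r)"
  obtain c b e where x: "x = (c,b,e)" by (cases x) auto
  obtain c2 b2 e2 where y: "y = (c2,b2,e2)" by (cases y) auto
  have 1: "(s * ((c + c2) mod int q)) mod int q = ((s * c) mod int q + (s * c2) mod int q) mod int q"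
    by (simp add: mod_simps algebra_simps)
  have 2: "(k * ((b + (if e then - b2 else b2)) mod int r) + (if e \<noteq> e2 then j else 0)) mod int r =
     ((k * b + (if e then j else 0)) mod int r +
      (if e then - ((k * b2 + (if e2 then j else 0)) mod int r) else (k * b2 + (if e2 then j else 0)) mod int r)) mod int r"
    by (cases e; cases e2) (simp_all add: mod_inner1 mod_inner2 mod_simps algebra_simps)
  show "Fm q r s k j (x \<otimes>\<^bsub>CqD q r\<^esub> y) = Fm q r s k j x \<otimes>\<^bsub>CqD q r\<^esub> Fm q r s k j y"
    unfolding x y G_mult Fm_simp using 1 2 by simp
qed

lemma Fm_invol: assumes "q > 0" "r > 0" "s \<in> {1,-1}" "k = -1 \<or> (k = 1 \<and> j = 0)" "x \<in> carrier (CqD q r)"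
  shows "Fm q r s k j (Fm q r s k j x) = x"
proof -
  obtain c b e where x: "x = (c,b,e)" by (cases x) auto
  have c: "0 \<le> c" "c < int q" and b: "0 \<le> b" "b < int r" using assms(1,5) by (auto simp: x G_carrier)
  have "(s * ((s * c) mod int q)) mod int q = c"
    using assms(3) c by (auto simp: mod_simps)
  moreover have "(k * ((k * b + (if e then j else 0)) mod int r) + (if e then j else 0)) mod int r = b"
    using assms(4) b by (auto simp: mod_simps algebra_simps)
  ultimately show ?thesis by (simp add: x Fm_simp)
qed

lemma Fm_iso: assumes "q > 0" "r > 0" "s \<in> {1,-1}" "k = -1 \<or> (k = 1 \<and> j = 0)"
  shows "Fm q r s k j \<in> iso (CqD q r) (CqD q r)"
proof -
  have h: "Fm q r s k j \<in> hom (CqD q r) (CqD q r)" using Fm_hom assms by blast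
  then have f: "Fm q r s k j \<in> carrier (CqD q r) \<rightarrow> carrier (CqD q r)" by (simp add: hom_def)
  have "bij_betw (Fm q r s k j) (carrier (CqD q r)) (carrier (CqD q r))"
    by (rule bij_betwI[OF f f]) (use Fm_invol assms in blast)+
  then show ?thesis using h by (simp add: iso_def)
qed

lemma Fm_Aut: assumes "q > 0" "r > 0" "s \<in> {1,-1}" "k = -1 \<or> (k = 1 \<and> j = 0)"
  and "S \<subseteq> carrier (CqD q r)" and "\<And>x. x \<in> S \<Longrightarrow> Fm q r s k j x \<in> S"
  shows "Fm q r s k j \<in> Aut_stab (CqD q r) S"
proof -
  have "Fm q r s k j ` S = S"
  proof
    show "Fm q r s k j ` S \<subseteq> S" using assms(6) by blast
    show "S \<subseteq> Fm q r s k j ` S"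
    proof
      fix x assume "x \<in> S"
      then have "x \<in> carrier (CqD q r)" using assms(5) by blast
      then have "x = Fm q r s k j (Fm q r s k j x)" using Fm_invol[OF assms(1-4)] by metis
      then show "x \<in> Fm q r s k j ` S" using assms(6) \<open>x \<in> S\<close> by blast
    qed
  qed
  then show ?thesis using Fm_iso[OF assms(1-4)] by (simp add: Aut_stab_def)
qed



lemma "Factorial_Ring.prime (5::nat)" by simp
lemma "Factorial_Ring.prime (3::nat)" by simp

lemma cover: assumes "Factorial_Ring.prime (q::nat)" "c mod int q \<noteq> 0"
  shows "\<exists>n. (int (Suc n) * c) mod int q = m mod int q"
proof -
  have "Factorial_Ring.prime (int q)" using assms(1) by simp
  then have "coprime c (int q)" using assms(2)
    by (metis dvd_eq_mod_eq_0 prime_imp_coprime coprime_commute)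
  then obtain u v where uv: "u * c + v * int q = 1" using bezout_int[of c "int q"] by auto
  define n where "n = nat ((u*m - 1) mod int q)"
  have q0: "int q > 0" using assms(1) prime_gt_0_nat by auto
  have "int (Suc n) = (u*m - 1) mod int q + 1" using q0 by (simp add: n_def)
  then have "(int (Suc n) * c) mod int q = (((u*m - 1) mod int q + 1) * c) mod int q" by (simp only:)
  also have "\<dots> = (((u*m - 1) + 1) * c) mod int q" by (metis mod_add_left_eq mod_mult_left_eq)
  also have "\<dots> = (m * (u * c)) mod int q" by (simp add: algebra_simps)
  also have "\<dots> = (m * (1 - v * int q)) mod int q"
  proof -
    have uc: "u * c = 1 - v * int q" using uv by linarith
    show ?thesis by (simp only: uc)
  qed
  also have "\<dots> = (m - (m * v) * int q) mod int q" by (simp add: algebra_simps)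
  also have "\<dots> = m mod int q" by (metis mod_mult_self1 diff_conv_add_uminus mult_minus_left)
  finally show ?thesis by blast
qed

definition closedG :: "nat \<Rightarrow> nat \<Rightarrow> (int \<times> int \<times> bool) set \<Rightarrow> bool" where
  "closedG q r Y \<longleftrightarrow> (\<forall>x\<in>Y. \<forall>y\<in>Y. monoid.mult (CqD q r) x y \<in> Y)"

lemma powA: assumes cl: "closedG q r Y" and x: "(c,b,False) \<in> Y"
  and c: "0 \<le> c" "c < int q" and b: "0 \<le> b" "b < int r"
  shows "((int (Suc n) * c) mod int q, (int (Suc n) * b) mod int r, False) \<in> Y"
proof (induction n)
  case 0
  then show ?case using x c b by simp
next
  case (Suc n)
  have "(c,b,False) \<otimes>\<^bsub>CqD q r\<^esub> ((int (Suc n) * c) mod int q, (int (Suc n) * b) mod int r, False) \<in> Y"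
    using cl x Suc unfolding closedG_def by blast
  moreover have "(c + (int (Suc n) * c) mod int q) mod int q = (int (Suc (Suc n)) * c) mod int q"
    by (simp add: mod_simps algebra_simps)
  moreover have "(b + (int (Suc n) * b) mod int r) mod int r = (int (Suc (Suc n)) * b) mod int r"
    by (simp add: mod_simps algebra_simps)
  ultimately show ?case by (simp add: G_mult)
qed

lemma cov_A: assumes "closedG q r Y" "(c0,0,False) \<in> Y" "0 < c0" "c0 < int q" "Factorial_Ring.prime q"
    "0 \<le> m" "m < int q" "r > 0"
  shows "(m,0,False) \<in> Y"
proof -
  have "c0 mod int q \<noteq> 0" using assms(3,4) by simp
  then obtain n where n: "(int (Suc n) * c0) mod int q = m mod int q" using cover assms(5) by blast
  have "((int (Suc n) * c0) mod int q, (int (Suc n) * 0) mod int r, False) \<in> Y"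
    using powA[OF assms(1,2), of n] assms(3,4,8) by simp
  then show ?thesis using n assms(6,7) by simp
qed

lemma cov_B: assumes "closedG q r Y" "(0,b0,False) \<in> Y" "0 < b0" "b0 < int r" "Factorial_Ring.prime r"
    "0 \<le> m" "m < int r" "q > 0"
  shows "(0,m,False) \<in> Y"
proof -
  have "b0 mod int r \<noteq> 0" using assms(3,4) by simp
  then obtain n where n: "(int (Suc n) * b0) mod int r = m mod int r" using cover assms(5) by blast
  have "((int (Suc n) * 0) mod int q, (int (Suc n) * b0) mod int r, False) \<in> Y"
    using powA[OF assms(1,2), of n] assms(3,4,8) by simp
  then show ?thesis using n assms(6,7) by simp
qed

lemma rotgen: assumes "closedG q r Y" "(c,b,False) \<in> Y" "0 < c" "c < int q" "0 \<le> b" "b < int r"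
   "Factorial_Ring.prime q" "Factorial_Ring.prime r" "q \<noteq> r"
  shows "\<exists>c0. 0 < c0 \<and> c0 < int q \<and> (c0,0,False) \<in> Y"
proof -
  obtain n where n: "Suc n = r" using assms(8) prime_gt_0_nat by (metis gr0_implies_Suc)
  have Y: "((int r * c) mod int q, (int r * b) mod int r, False) \<in> Y"
    using powA[OF assms(1,2), of n] assms(3-6) n by simp
  have "\<not> int q dvd int r * c"
  proof
    assume "int q dvd int r * c"
    moreover have "Factorial_Ring.prime (int q)" using assms(7) by simp
    ultimately have "int q dvd int r \<or> int q dvd c" using prime_dvd_mult_iff by blast
    moreover have "\<not> int q dvd c" using assms(3,4) zdvd_not_zless by metis
    moreover have "\<not> q dvd r" using assms(7-9) primes_dvd_imp_eq by metis
    ultimately show False by (simp only: int_dvd_int_iff) simp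
  qed
  then have "(int r * c) mod int q \<noteq> 0" by auto
  moreover have "(int r * c) mod int q \<ge> 0" "(int r * c) mod int q < int q" using assms(7) prime_gt_0_nat[of q] by simp_all
  ultimately show ?thesis using Y by (intro exI[of _ "(int r * c) mod int q"]) auto
qed

lemma sqgen: assumes "closedG q r Y" "(c,b,True) \<in> Y" "0 < c" "c < int q" "Factorial_Ring.prime q" "odd q"
  shows "\<exists>c0. 0 < c0 \<and> c0 < int q \<and> (c0,0,False) \<in> Y"
proof -
  have "monoid.mult (CqD q r) (c,b,True) (c,b,True) \<in> Y"
    using assms(1,2) unfolding closedG_def by blast
  then have Y: "((c + c) mod int q, (b - b) mod int r, False) \<in> Y"
    by (simp add: G_mult)
  have "\<not> int q dvd 2 * c"
  proof
    assume "int q dvd 2 * c"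
    moreover have "Factorial_Ring.prime (int q)" using assms(5) by simp
    ultimately have "int q dvd 2 \<or> int q dvd c" using prime_dvd_mult_iff by blast
    moreover have "\<not> int q dvd c" using assms(3,4) zdvd_not_zless by metis
    moreover have "\<not> int q dvd 2"
    proof
      assume "int q dvd 2"
      then have "q dvd 2" by (metis int_dvd_int_iff of_nat_numeral)
      then have "q \<le> 2" by (simp add: dvd_imp_le)
      moreover have "q \<ge> 2" using assms(5) prime_ge_2_nat by blast
      ultimately have "q = 2" by simp
      then show False using assms(6) by simp
    qed
    ultimately show False by simp
  qed
  moreover have "c + c = 2 * c" by simp
  ultimately have "(c + c) mod int q \<noteq> 0" by (simp only: dvd_eq_mod_eq_0[symmetric]) simp
  moreover have "(c + c) mod int q \<ge> 0" "(c + c) mod int q < int q" using assms(5) prime_gt_0_nat[of q] by simp_all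
  ultimately show ?thesis using Y by (intro exI[of _ "(c + c) mod int q"]) auto
qed


lemma sym5: "\<exists>j\<in>{0,1,2,3,4::int}. \<forall>b\<in>{0,1,2,3,4::int}. b \<in> T \<longrightarrow> (j - b) mod 5 \<in> T"
  by (cases "0 \<in> T"; cases "1 \<in> T"; cases "2 \<in> T"; cases "3 \<in> T"; cases "4 \<in> T") (simp_all, blast)
lemma sym3: "\<exists>j\<in>{0,1,2::int}. \<forall>b\<in>{0,1,2::int}. b \<in> T \<longrightarrow> (j - b) mod 3 \<in> T"
  by (cases "0 \<in> T"; cases "1 \<in> T"; cases "2 \<in> T") (simp_all, blast?)
lemma symm_exists: assumes "r \<in> {3,5}" "T \<subseteq> {0..<int r}"
  shows "\<exists>j. \<forall>b\<in>T. (j - b) mod int r \<in> T"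
proof (cases "r = 3")
  case True
  have T3: "b \<in> {0,1,2}" if "b \<in> T" for b
  proof -
    have "0 \<le> b" "b < 3" using that assms(2) True by auto
    then show ?thesis by auto
  qed
  obtain j where j: "\<forall>b\<in>{0,1,2::int}. b \<in> T \<longrightarrow> (j - b) mod 3 \<in> T" using sym3[of T] by blast
  have "\<forall>b\<in>T. (j - b) mod 3 \<in> T"
  proof
    fix b assume "b \<in> T"
    then show "(j - b) mod 3 \<in> T" using j T3[OF \<open>b \<in> T\<close>] by blast
  qed
  then show ?thesis using True by auto
next
  case False
  then have r: "r = 5" using assms(1) by simp
  have T5: "b \<in> {0,1,2,3,4}" if "b \<in> T" for b
  proof -
    have "0 \<le> b" "b < 5" using that assms(2) r by auto
    then show ?thesis by auto
  qed
  obtain j where j: "\<forall>b\<in>{0,1,2,3,4::int}. b \<in> T \<longrightarrow> (j - b) mod 5 \<in> T" using sym5[of T] by blast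
  have "\<forall>b\<in>T. (j - b) mod 5 \<in> T"
  proof
    fix b assume "b \<in> T"
    then show "(j - b) mod 5 \<in> T" using j T5[OF \<open>b \<in> T\<close>] by blast
  qed
  then show ?thesis using r by auto
qed


lemma mult_upd: "monoid.mult (G\<lparr>carrier := A\<rparr>) = monoid.mult G" by simp
lemma one_upd: "monoid.one (G\<lparr>carrier := A\<rparr>) = monoid.one G" by simp

locale WP =
  fixes q r :: nat and S K H :: "(int \<times> int \<times> bool) set"
  assumes r35: "r \<in> {3, 5}" and qp: "Factorial_Ring.prime q" and qodd: "odd q" and qr: "q \<noteq> r"
    and Ssub: "S \<subseteq> carrier (CqD q r)"
    and Sinv0: "\<forall>s\<in>S. inv\<^bsub>CqD q r\<^esub> s \<in> S"
    and wr: "nontrivial_gen_wreath (CqD q r) S K H"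
begin

lemma q3: "q \<ge> 3"
proof -
  have "q \<ge> 2" using qp prime_ge_2_nat by blast
  moreover have "q \<noteq> 2" using qodd by auto
  ultimately show ?thesis by simp
qed

lemma q0: "q > 0" using q3 by simp
lemma r3: "r \<ge> 3" using r35 by auto
lemma r0: "r > 0" using r3 by simp
lemma rp: "Factorial_Ring.prime r" using r35 by auto

lemma carr: "carrier (CqD q r) = {0..<int q} \<times> ({0..<int r} \<times> UNIV)"
  using G_carrier q0 by blast

lemma grp: "group (CqD q r)" using G_group q0 r0 by blast

lemma HS: "subgroup H (CqD q r)" and Hne: "H \<noteq> carrier (CqD q r)" and KH: "K \<subseteq> H"
  and Kn: "normal K ((CqD q r)\<lparr>carrier := H\<rparr>)" and Kne: "K \<noteq> {\<one>\<^bsub>CqD q r\<^esub>}"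
  and L: "K <#>\<^bsub>CqD q r\<^esub> (S - H) = S - H" and R: "(S - H) <#>\<^bsub>CqD q r\<^esub> K = S - H"
  using wr[unfolded nontrivial_gen_wreath_def] by blast+

lemma Hsub: "H \<subseteq> carrier (CqD q r)" using HS subgroup.subset by blast

lemma Hcl: "closedG q r H" using subgroup.m_closed[OF HS] unfolding closedG_def by blast

lemma KS: "subgroup K ((CqD q r)\<lparr>carrier := H\<rparr>)" using Kn normal_imp_subgroup by blast

lemma Kcl: "closedG q r K"
  unfolding closedG_def
proof (intro ballI)
  fix x y assume "x \<in> K" "y \<in> K"
  then have "x \<otimes>\<^bsub>(CqD q r)\<lparr>carrier := H\<rparr>\<^esub> y \<in> K" using subgroup.m_closed[OF KS] by blast
  then show "monoid.mult (CqD q r) x y \<in> K" by (simp only: mult_upd)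
qed

lemma Kex: "\<exists>k\<in>K. k \<noteq> (0,0,False)"
proof -
  have "\<one>\<^bsub>(CqD q r)\<lparr>carrier := H\<rparr>\<^esub> \<in> K" using subgroup.one_closed[OF KS] by blast
  then have "(0,0,False) \<in> K" by (simp only: one_upd G_one)
  show ?thesis
  proof (rule ccontr)
    assume "\<not> ?thesis"
    then have "K \<subseteq> {(0,0,False)}" by blast
    with \<open>(0,0,False) \<in> K\<close> have "K = {(0,0,False)}" by blast
    then show False using Kne[unfolded G_one] by blast
  qed
qed

lemma Knorm: assumes "h \<in> H" "k \<in> K" shows "h \<otimes>\<^bsub>CqD q r\<^esub> k \<otimes>\<^bsub>CqD q r\<^esub> inv\<^bsub>CqD q r\<^esub> h \<in> K"
proof -
  have g: "group ((CqD q r)\<lparr>carrier := H\<rparr>)" using subgroup.subgroup_is_group[OF HS grp] .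
  have "h \<otimes>\<^bsub>(CqD q r)\<lparr>carrier := H\<rparr>\<^esub> k \<otimes>\<^bsub>(CqD q r)\<lparr>carrier := H\<rparr>\<^esub> inv\<^bsub>(CqD q r)\<lparr>carrier := H\<rparr>\<^esub> h \<in> K"
    using normal.inv_op_closed2[OF Kn] assms by simp
  then show ?thesis using group.m_inv_consistent[OF grp HS assms(1)] by simp
qed

lemma Lcl: assumes "k \<in> K" "s \<in> S - H" shows "k \<otimes>\<^bsub>CqD q r\<^esub> s \<in> S - H"
proof -
  have "k \<otimes>\<^bsub>CqD q r\<^esub> s \<in> K <#>\<^bsub>CqD q r\<^esub> (S - H)" using assms unfolding set_mult_def by blast
  then show ?thesis using L by simp
qed

lemma Rcl: assumes "k \<in> K" "s \<in> S - H" shows "s \<otimes>\<^bsub>CqD q r\<^esub> k \<in> S - H"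
proof -
  have "s \<otimes>\<^bsub>CqD q r\<^esub> k \<in> (S - H) <#>\<^bsub>CqD q r\<^esub> K" using assms unfolding set_mult_def by blast
  then show ?thesis using R by simp
qed

lemma Sinv: assumes "(c,b,e) \<in> S" shows "((-c) mod int q, (if e then b else (-b) mod int r), e) \<in> S"
proof -
  have "(c,b,e) \<in> carrier (CqD q r)" using Ssub assms by blast
  then have "inv\<^bsub>CqD q r\<^esub> (c,b,e) = ((-c) mod int q, (if e then b else (-b) mod int r), e)"
    using G_inv[OF q0 r0] by blast
  moreover have "inv\<^bsub>CqD q r\<^esub> (c,b,e) \<in> S" using Sinv0 assms by blast
  ultimately show ?thesis by simp
qed

lemma Hinv: assumes "x \<in> carrier (CqD q r)" "inv\<^bsub>CqD q r\<^esub> x \<in> H" shows "x \<in> H"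
proof -
  have "inv\<^bsub>CqD q r\<^esub> (inv\<^bsub>CqD q r\<^esub> x) \<in> H" using subgroup.m_inv_closed[OF HS assms(2)] .
  then show ?thesis using group.inv_inv[OF grp assms(1)] by simp
qed

lemma HR: assumes allrot: "\<And>c b. 0 \<le> c \<Longrightarrow> c < int q \<Longrightarrow> 0 \<le> b \<Longrightarrow> b < int r \<Longrightarrow> (c,b,False) \<in> H"
  shows "(c,b,True) \<notin> H"
proof
  assume cbH: "(c,b,True) \<in> H"
  then have cb: "0 \<le> c" "c < int q" "0 \<le> b" "b < int r" using Hsub carr by auto
  have "carrier (CqD q r) \<subseteq> H"
  proof
    fix g assume "g \<in> carrier (CqD q r)"
    then obtain c2 b2 e2 where g: "g = (c2,b2,e2)" "0 \<le> c2" "c2 < int q" "0 \<le> b2" "b2 < int r"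
      using carr by auto
    show "g \<in> H"
    proof (cases e2)
      case False then show ?thesis using g allrot by simp
    next
      case True
      have "((c2 - c) mod int q, (b2 - b) mod int r, False) \<in> H" using allrot q0 r0 by simp
      then have "monoid.mult (CqD q r) ((c2 - c) mod int q, (b2 - b) mod int r, False) (c,b,True) \<in> H"
        using Hcl cbH unfolding closedG_def by blast
      moreover have "((c2 - c) mod int q + c) mod int q = c2" using g by (simp add: mod_simps)
      moreover have "((b2 - b) mod int r + b) mod int r = b2" using g by (simp add: mod_simps)
      ultimately show ?thesis using g True by (simp add: G_mult)
    qed
  qed
  then show False using Hne Hsub by blast
qed

lemma allrotI: assumes "\<And>m. 0 \<le> m \<Longrightarrow> m < int q \<Longrightarrow> (m,0,False) \<in> H"
  "\<And>m. 0 \<le> m \<Longrightarrow> m < int r \<Longrightarrow> (0,m,False) \<in> H"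
  shows "\<And>c b. 0 \<le> c \<Longrightarrow> c < int q \<Longrightarrow> 0 \<le> b \<Longrightarrow> b < int r \<Longrightarrow> (c,b,False) \<in> H"
proof -
  fix c b assume "0 \<le> c" "c < int q" "0 \<le> b" "b < int r"
  then have "monoid.mult (CqD q r) (c,0,False) (0,b,False) \<in> H"
    using assms Hcl unfolding closedG_def by blast
  then show "(c,b,False) \<in> H" using \<open>0 \<le> c\<close> \<open>c < int q\<close> \<open>0 \<le> b\<close> \<open>b < int r\<close> by (simp add: G_mult)
qed

lemma moved1: "Fm q r (-1) k 0 (1,0,False) \<noteq> (1,0,False)" and mem1: "(1,0,False) \<in> carrier (CqD q r)"
proof -
  have "(-1) mod int q = int q - 1" using q3 by (simp add: zmod_minus1)
  then show "Fm q r (-1) k 0 (1,0,False) \<noteq> (1,0,False)" using q3 by (simp add: Fm_simp)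
  show "(1,0,False) \<in> carrier (CqD q r)" using carr q3 r0 by simp
qed

end


context WP begin

lemma caseA: assumes A: "\<exists>c0. 0 < c0 \<and> c0 < int q \<and> (c0,0,False) \<in> K"
  shows "\<exists>\<sigma>\<in>Aut_stab (CqD q r) S. \<exists>x\<in>carrier (CqD q r). \<sigma> x \<noteq> x"
proof -
  obtain c0 where c0: "0 < c0" "c0 < int q" "(c0,0,False) \<in> K" using A by blast
  have allCK: "(m,0,False) \<in> K" if "0 \<le> m" "m < int q" for m
    using cov_A[OF Kcl c0(3) c0(1) c0(2) qp that r0] .
  have transA: "(c2,b,e) \<in> S - H" if "(c,b,e) \<in> S - H" "0 \<le> c2" "c2 < int q" for c b e c2
  proof -
    have b: "0 \<le> b" "b < int r" using that(1) Ssub carr by auto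
    have "((c2 - c) mod int q, 0, False) \<in> K" using allCK q0 by simp
    then have "monoid.mult (CqD q r) ((c2 - c) mod int q, 0, False) (c,b,e) \<in> S - H"
      using Lcl that(1) by blast
    moreover have "((c2 - c) mod int q + c) mod int q = c2" using that(2,3) by (simp add: mod_simps)
    ultimately show ?thesis using b by (simp add: G_mult)
  qed
  show ?thesis
  proof (cases "\<exists>c b. b \<noteq> 0 \<and> (c,b,False) \<in> H")
    case False
    note noR = False
    have "Fm q r (-1) 1 0 x \<in> S" if xS: "x \<in> S" for x
    proof -
      obtain c b e where x: "x = (c,b,e)" by (cases x) auto
      have cb: "0 \<le> c" "c < int q" "0 \<le> b" "b < int r" using xS Ssub carr x by auto
      have Fx: "Fm q r (-1) 1 0 x = ((-c) mod int q, b, e)" using cb by (simp add: x Fm_simp)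
      show ?thesis
      proof (cases "x \<in> H")
        case True
        show ?thesis
        proof (cases e)
          case True
          then show ?thesis using Sinv[of c b e] xS x Fx by simp
        next
          case e: False
          have "(c,b,False) \<in> H" using \<open>x \<in> H\<close> x e by simp
          then have "b = 0" using noR by auto
          then show ?thesis using Sinv[of c b e] xS x Fx e by simp
        qed
      next
        case False
        have "((-c) mod int q, b, e) \<in> S - H"
          using transA[of c b e "(-c) mod int q"] xS False x q0 by simp
        then show ?thesis using Fx by simp
      qed
    qed
    then have "Fm q r (-1) 1 0 \<in> Aut_stab (CqD q r) S"
      using Fm_Aut[OF q0 r0, of "-1" 1 0 S] Ssub by simp
    then show ?thesis using moved1 mem1 by blast
  next
    case True
    then obtain c1 b1 where c1: "b1 \<noteq> 0" "(c1,b1,False) \<in> H" by blast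
    have cb1: "0 \<le> c1" "c1 < int q" "0 \<le> b1" "b1 < int r" using c1 Hsub carr by auto
    have allCH: "(m,0,False) \<in> H" if "0 \<le> m" "m < int q" for m
      using allCK that KH by blast
    have "((-c1) mod int q, 0, False) \<in> H" using allCH q0 by simp
    then have "monoid.mult (CqD q r) ((-c1) mod int q, 0, False) (c1,b1,False) \<in> H"
      using Hcl c1(2) unfolding closedG_def by blast
    moreover have "((-c1) mod int q + c1) mod int q = 0" by (simp add: mod_simps)
    ultimately have "(0,b1,False) \<in> H" using cb1 by (simp add: G_mult)
    then have allRH: "(0,m,False) \<in> H" if "0 \<le> m" "m < int r" for m
      using cov_B[OF Hcl _ _ _ rp that q0] cb1 c1(1) by simp
    have noref: "(c,b,True) \<notin> H" for c b
      using HR[OF allrotI[OF allCH allRH]] by blast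
    define T where "T = {b. (0,b,True) \<in> S}"
    have "T \<subseteq> {0..<int r}" using Ssub carr unfolding T_def by auto
    then obtain j where j: "\<forall>b\<in>T. (j - b) mod int r \<in> T" using symm_exists r35 by blast
    have "Fm q r (-1) (-1) j x \<in> S" if xS: "x \<in> S" for x
    proof -
      obtain c b e where x: "x = (c,b,e)" by (cases x) auto
      have cb: "0 \<le> c" "c < int q" "0 \<le> b" "b < int r" using xS Ssub carr x by auto
      show ?thesis
      proof (cases e)
        case False
        then show ?thesis using Sinv[of c b e] xS x by (simp add: Fm_simp)
      next
        case True
        have "x \<in> S - H" using xS noref x True by simp
        then have "(0,b,True) \<in> S - H" using transA[of c b e 0] x True q0 by simp
        then have "b \<in> T" unfolding T_def by simp
        then have "(j - b) mod int r \<in> T" using j by blast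
        then have "(0,(j - b) mod int r,True) \<in> S - H" unfolding T_def using noref by simp
        then have "((-c) mod int q,(j - b) mod int r,True) \<in> S - H"
          using transA[of 0 "(j - b) mod int r" True "(-c) mod int q"] q0 by simp
        moreover have "Fm q r (-1) (-1) j x = ((-c) mod int q,(j - b) mod int r,True)"
          using True by (simp add: x Fm_simp)
        ultimately show ?thesis by simp
      qed
    qed
    then have "Fm q r (-1) (-1) j \<in> Aut_stab (CqD q r) S"
      using Fm_Aut[OF q0 r0, of "-1" "-1" j S] Ssub by simp
    moreover have "Fm q r (-1) (-1) j (1,0,False) \<noteq> (1,0,False)"
    proof -
      have "(-1) mod int q = int q - 1" using q3 by (simp add: zmod_minus1)
      then show ?thesis using q3 by (simp add: Fm_simp)
    qed
    ultimately show ?thesis using mem1 by blast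
  qed
qed

end


context WP begin

lemma caseB: assumes nA: "\<not> (\<exists>c0. 0 < c0 \<and> c0 < int q \<and> (c0,0,False) \<in> K)"
  and B: "\<exists>b0. 0 < b0 \<and> b0 < int r \<and> (0,b0,False) \<in> K"
  shows "\<exists>\<sigma>\<in>Aut_stab (CqD q r) S. \<exists>x\<in>carrier (CqD q r). \<sigma> x \<noteq> x"
proof -
  obtain b0 where b0: "0 < b0" "b0 < int r" "(0,b0,False) \<in> K" using B by blast
  have allRK: "(0,m,False) \<in> K" if "0 \<le> m" "m < int r" for m
    using cov_B[OF Kcl b0(3) b0(1) b0(2) rp that q0] .
  have transB: "(c,b2,e) \<in> S - H" if "(c,b,e) \<in> S - H" "0 \<le> b2" "b2 < int r" for c b e b2
  proof -
    have cb: "0 \<le> c" "c < int q" using that(1) Ssub carr by auto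
    define m where "m = (if e then (b - b2) mod int r else (b2 - b) mod int r)"
    have "(0, m, False) \<in> K" using allRK r0 unfolding m_def by simp
    then have "monoid.mult (CqD q r) (c,b,e) (0, m, False) \<in> S - H"
      using Rcl that(1) by blast
    moreover have "(b + (if e then - m else m)) mod int r = b2"
      using that(2,3) unfolding m_def by (cases e) (simp_all add: mod_simps)
    ultimately show ?thesis using cb by (simp add: G_mult)
  qed
  show ?thesis
  proof (cases "\<exists>c b e. c \<noteq> 0 \<and> (c,b,e) \<in> H")
    case False
    note noC = False
    have "Fm q r (-1) 1 0 x \<in> S" if xS: "x \<in> S" for x
    proof -
      obtain c b e where x: "x = (c,b,e)" by (cases x) auto
      have cb: "0 \<le> c" "c < int q" "0 \<le> b" "b < int r" using xS Ssub carr x by auto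
      have Fx: "Fm q r (-1) 1 0 x = ((-c) mod int q, b, e)" using cb by (simp add: x Fm_simp)
      show ?thesis
      proof (cases "x \<in> H")
        case True
        have "(c,b,e) \<in> H" using True x by simp
        then have "c = 0" using noC by auto
        then show ?thesis using Fx xS x by simp
      next
        case False
        have xc: "x \<in> carrier (CqD q r)" using xS Ssub by blast
        have ix: "inv\<^bsub>CqD q r\<^esub> x = ((-c) mod int q, (if e then b else (-b) mod int r), e)"
          using G_inv[OF q0 r0, of c b e] xc x by simp
        have "inv\<^bsub>CqD q r\<^esub> x \<notin> H" using Hinv[OF xc] False by blast
        moreover have "((-c) mod int q, (if e then b else (-b) mod int r), e) \<in> S" using Sinv[of c b e] xS x by simp
        ultimately have "((-c) mod int q, (if e then b else (-b) mod int r), e) \<in> S - H" using ix by simp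
        then have "((-c) mod int q, b, e) \<in> S - H"
          using transB[of "(-c) mod int q" "(if e then b else (-b) mod int r)" e b] cb by simp
        then show ?thesis using Fx by simp
      qed
    qed
    then have "Fm q r (-1) 1 0 \<in> Aut_stab (CqD q r) S"
      using Fm_Aut[OF q0 r0, of "-1" 1 0 S] Ssub by simp
    then show ?thesis using moved1 mem1 by blast
  next
    case True
    then obtain c1 b1 e1 where c1: "c1 \<noteq> 0" "(c1,b1,e1) \<in> H" by blast
    have cb1: "0 < c1" "c1 < int q" "0 \<le> b1" "b1 < int r" using c1 Hsub carr by auto
    have "\<exists>c0. 0 < c0 \<and> c0 < int q \<and> (c0,0,False) \<in> H"
    proof (cases e1)
      case True
      then show ?thesis using sqgen[OF Hcl _ cb1(1,2) qp qodd, of b1] c1(2) by simp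
    next
      case False
      then show ?thesis using rotgen[OF Hcl _ cb1(1-4) qp rp qr] c1(2) by simp
    qed
    then obtain c0 where c0: "0 < c0" "c0 < int q" "(c0,0,False) \<in> H" by blast
    have allCH: "(m,0,False) \<in> H" if "0 \<le> m" "m < int q" for m
      using cov_A[OF Hcl c0(3) c0(1) c0(2) qp that r0] .
    have allRH: "(0,m,False) \<in> H" if "0 \<le> m" "m < int r" for m
      using allRK[OF that] KH by blast
    have noref: "(c,b,True) \<notin> H" for c b
      using HR[OF allrotI[OF allCH allRH]] by blast
    have "Fm q r (-1) (-1) 0 x \<in> S" if xS: "x \<in> S" for x
    proof -
      obtain c b e where x: "x = (c,b,e)" by (cases x) auto
      have cb: "0 \<le> c" "c < int q" "0 \<le> b" "b < int r" using xS Ssub carr x by auto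
      show ?thesis
      proof (cases e)
        case False
        then show ?thesis using Sinv[of c b e] xS x by (simp add: Fm_simp)
      next
        case True
        have "((-c) mod int q, b, True) \<in> S" using Sinv[of c b e] xS x True by simp
        then have "((-c) mod int q, b, True) \<in> S - H" using noref by simp
        then have "((-c) mod int q, (-b) mod int r, True) \<in> S - H"
          using transB[of "(-c) mod int q" b True "(-b) mod int r"] r0 by simp
        moreover have "Fm q r (-1) (-1) 0 x = ((-c) mod int q, (-b) mod int r, True)"
          using True by (simp add: x Fm_simp)
        ultimately show ?thesis by simp
      qed
    qed
    then have "Fm q r (-1) (-1) 0 \<in> Aut_stab (CqD q r) S"
      using Fm_Aut[OF q0 r0, of "-1" "-1" 0 S] Ssub by simp
    then show ?thesis using moved1 mem1 by blast
  qed
qed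

end


lemma eq_of_mod0: "0 \<le> (a::int) \<Longrightarrow> a < r \<Longrightarrow> 0 \<le> a' \<Longrightarrow> a' < r \<Longrightarrow> (a - a') mod r = 0 \<Longrightarrow> a = a'"
proof -
  assume h: "0 \<le> a" "a < r" "0 \<le> a'" "a' < r" "(a - a') mod r = 0"
  then have "r dvd a - a'" by (simp add: dvd_eq_mod_eq_0)
  then have "a mod r = a' mod r" by (simp add: mod_eq_dvd_iff)
  then show "a = a'" using h by simp
qed

context WP begin

lemma caseC: assumes nA: "\<not> (\<exists>c0. 0 < c0 \<and> c0 < int q \<and> (c0,0,False) \<in> K)"
  and nB: "\<not> (\<exists>b0. 0 < b0 \<and> b0 < int r \<and> (0,b0,False) \<in> K)"
  shows "\<exists>\<sigma>\<in>Aut_stab (CqD q r) S. \<exists>x\<in>carrier (CqD q r). \<sigma> x \<noteq> x"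
proof -
  interpret G: group "CqD q r" using grp .
  have nB': "(0,t,False) \<notin> K" if "0 < t" "t < int r" for t using nB that by blast
  obtain k where kK: "k \<in> K" and k1: "k \<noteq> (0,0,False)" using Kex by blast
  obtain c a e where k: "k = (c,a,e)" by (cases k) auto
  have Kc: "K \<subseteq> carrier (CqD q r)" using KH Hsub by blast
  have ca: "0 \<le> c" "c < int q" "0 \<le> a" "a < int r" using kK Kc carr k by auto
  have ce: "e \<and> c = 0"
  proof (cases e)
    case False
    show ?thesis
    proof (cases "c = 0")
      case True
      then have "a \<noteq> 0" using k1 k False by simp
      then show ?thesis using nB kK k False True ca by auto
    next
      case c0: False
      then have "0 < c" using ca by simp
      have "(c,a,False) \<in> K" using kK k False by simp
      then show ?thesis using rotgen[OF Kcl _ \<open>0 < c\<close> ca(2-4) qp rp qr] nA by blast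
    qed
  next
    case True
    show ?thesis
    proof (rule ccontr)
      assume "\<not> ?thesis"
      then have "0 < c" using True ca by simp
      have "(c,a,True) \<in> K" using kK k True by simp
      then show False using sqgen[OF Kcl _ \<open>0 < c\<close> ca(2) qp qodd] nA by blast
    qed
  qed
  then have k: "k = (0,a,True)" using k by simp
  have kc: "k \<in> carrier (CqD q r)" using kK Kc by blast
  have kk: "k \<otimes>\<^bsub>CqD q r\<^esub> k = \<one>\<^bsub>CqD q r\<^esub>" by (simp add: k G_mult G_one)
  have comm: "h \<otimes>\<^bsub>CqD q r\<^esub> k = k \<otimes>\<^bsub>CqD q r\<^esub> h" if hH: "h \<in> H" for h
  proof -
    obtain c2 b2 e2 where h: "h = (c2,b2,e2)" by (cases h) auto
    have hc: "h \<in> carrier (CqD q r)" using hH Hsub by blast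
    have cb2: "0 \<le> c2" "c2 < int q" "0 \<le> b2" "b2 < int r" using hc carr h by auto
    define z where "z = h \<otimes>\<^bsub>CqD q r\<^esub> k \<otimes>\<^bsub>CqD q r\<^esub> inv\<^bsub>CqD q r\<^esub> h"
    have zK: "z \<in> K" unfolding z_def using Knorm[OF hH kK] .
    have ih: "inv\<^bsub>CqD q r\<^esub> h = ((-c2) mod int q, (if e2 then b2 else (-b2) mod int r), e2)"
      using G_inv[OF q0 r0, of c2 b2 e2] hc h by simp
    have "fst z = 0" "snd (snd z) = True"
      unfolding z_def ih by (simp_all add: h k G_mult mod_simps cb2)
    then obtain a' where z: "z = (0,a',True)" by (cases z) auto
    have a': "0 \<le> a'" "a' < int r" using zK Kc carr z by auto
    have "k \<otimes>\<^bsub>CqD q r\<^esub> z \<in> K" using Kcl kK zK unfolding closedG_def by blast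
    then have "(0, (a - a') mod int r, False) \<in> K" by (simp add: k z G_mult)
    moreover have "0 \<le> (a - a') mod int r" "(a - a') mod int r < int r" using r0 by simp_all
    ultimately have am: "(a - a') mod int r = 0"
      by (metis nB' order_le_less)
    have "a = a'" by (rule eq_of_mod0[OF ca(3,4) a' am])
    then have "h \<otimes>\<^bsub>CqD q r\<^esub> k \<otimes>\<^bsub>CqD q r\<^esub> inv\<^bsub>CqD q r\<^esub> h = k" using z k unfolding z_def by simp
    then show ?thesis using G.inv_solve_right'[of k "h \<otimes>\<^bsub>CqD q r\<^esub> k" h] hc kc by simp
  qed
  have sig: "Fm q r 1 (-1) (2*a) g = k \<otimes>\<^bsub>CqD q r\<^esub> (g \<otimes>\<^bsub>CqD q r\<^esub> k)" if gc: "g \<in> carrier (CqD q r)" for g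
  proof -
    obtain c2 b2 e2 where g: "g = (c2,b2,e2)" by (cases g) auto
    have cb2: "0 \<le> c2" "c2 < int q" "0 \<le> b2" "b2 < int r" using gc carr g by auto
    have "(- b2 + (if e2 then 2 * a else 0)) mod int r = (a + - ((b2 + (if e2 then - a else a)) mod int r)) mod int r"
      by (cases e2) (simp_all add: mod_simps algebra_simps)
    then show ?thesis using cb2 by (simp add: g k G_mult Fm_simp)
  qed
  have "Fm q r 1 (-1) (2*a) x \<in> S" if xS: "x \<in> S" for x
  proof -
    have xc: "x \<in> carrier (CqD q r)" using xS Ssub by blast
    show ?thesis
    proof (cases "x \<in> H")
      case True
      have "k \<otimes>\<^bsub>CqD q r\<^esub> (x \<otimes>\<^bsub>CqD q r\<^esub> k) = k \<otimes>\<^bsub>CqD q r\<^esub> (k \<otimes>\<^bsub>CqD q r\<^esub> x)"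
        using comm[OF True] by simp
      also have "\<dots> = (k \<otimes>\<^bsub>CqD q r\<^esub> k) \<otimes>\<^bsub>CqD q r\<^esub> x" using G.m_assoc kc xc by simp
      also have "\<dots> = x" using kk xc by simp
      finally show ?thesis using sig[OF xc] xS by simp
    next
      case False
      then have "x \<in> S - H" using xS by simp
      then have "x \<otimes>\<^bsub>CqD q r\<^esub> k \<in> S - H" using Rcl kK by blast
      then have "k \<otimes>\<^bsub>CqD q r\<^esub> (x \<otimes>\<^bsub>CqD q r\<^esub> k) \<in> S - H" using Lcl kK by blast
      then show ?thesis using sig[OF xc] by simp
    qed
  qed
  then have "Fm q r 1 (-1) (2*a) \<in> Aut_stab (CqD q r) S"
    using Fm_Aut[OF q0 r0, of 1 "-1" "2*a" S] Ssub by simp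
  moreover have "Fm q r 1 (-1) (2*a) (0,1,False) \<noteq> (0,1,False)"
  proof -
    have "(-1) mod int r = int r - 1" using r3 by (simp add: zmod_minus1)
    then show ?thesis using r3 by (simp add: Fm_simp)
  qed
  moreover have "(0,1,False) \<in> carrier (CqD q r)" using carr q0 r3 by simp
  ultimately show ?thesis by blast
qed

end

theorem proposition4p10:
  fixes q r :: nat and S K H :: "(int \<times> (int \<times> bool)) set"
  assumes "r \<in> {3, 5}" and "Factorial_Ring.prime q" and "odd q" and "q \<noteq> r"
    and "S \<subseteq> carrier (CqD q r)"
    and "\<forall>s\<in>S. inv\<^bsub>CqD q r\<^esub> s \<in> S"
    and "nontrivial_gen_wreath (CqD q r) S K H"
    and "Factorial_Ring.prime (card K)"
  shows "\<exists>\<sigma>\<in>Aut_stab (CqD q r) S. \<exists>x\<in>carrier (CqD q r). \<sigma> x \<noteq> x"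
proof -
  interpret WP q r S K H
    by (rule WP.intro) (rule assms)+
  show ?thesis
  proof (cases "\<exists>c0. 0 < c0 \<and> c0 < int q \<and> (c0,0,False) \<in> K")
    case True
    then show ?thesis by (rule caseA)
  next
    case nA: False
    show ?thesis
    proof (cases "\<exists>b0. 0 < b0 \<and> b0 < int r \<and> (0,b0,False) \<in> K")
      case True
      then show ?thesis by (rule caseB[OF nA])
    next
      case False
      then show ?thesis by (rule caseC[OF nA])
    qed
  qed
qed

end
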